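(* Let $G\in\Gamma_0(\mathbb{R}_+)$ and let $H=H_G$ be its marginal perspective function; assume $H$ is finite on $[0,\infty)^2$ and $H(u,1)>0$ for all $u\in[0,1)$. Let $a\in(0,1]$. If the function $$h(u):=\frac{(1-u^a)^{1/a}}{H(u,1)}$$ is decreasing on $[0,1)$, then $H^a$ satisfies the triangle inequality on $[0,+\infty)$, i.e. $H^a(x,z)\le H^a(x,y)+H^a(y,z)$ for all $x,y,z\ge 0$.
   Context: $\Gamma_0(\mathbb{R}_+)$ is the set of functions $F:[0,\infty)\to[0,\infty]$ that are convex, lower semicontinuous, with $F(1)=0$. For $F\in\Gamma_0(\mathbb{R}_+)$: the recession function is $\mathrm{rec}(F)(r)=\lim_{\alpha\to\infty}F(1+\alpha r)/\alpha$; the perspective function is $\hat F(r,t)=tF(r/t)$ for $t>0$ and $\hat F(r,0)=\mathrm{rec}(F)(r)$. The marginal perspective function $H_F:[0,\infty)^2\to[0,\infty]$ is the lower semicontinuous envelope of $\tilde H_F(r_1,r_2)=\inf_{\theta>0}[\hat F(\theta,r_1)+\hat F(\theta,r_2)]$; it is symmetric, jointly convex, positively $1$-homogeneous and vanishes on the diagonal. "Decreasing" means non-increasing. *)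

theory Defs
  imports "HOL-Analysis.Analysis" "HOL-Library.Extended_Nonnegative_Real"
begin

text \<open>Functions F : [0,\<infinity>) \<rightarrow> [0,\<infinity>] are modelled as real \<Rightarrow> ennreal; only the values on
  [0,\<infinity>) matter.\<close>

definition convex_on_nonneg :: "(real \<Rightarrow> ennreal) \<Rightarrow> bool" where
  "convex_on_nonneg F \<longleftrightarrow>
     (\<forall>x\<ge>0. \<forall>y\<ge>0. \<forall>t\<in>{0..1}.
        F ((1 - t) * x + t * y) \<le> ennreal (1 - t) * F x + ennreal t * F y)"

definition lsc_within :: "'a::topological_space set \<Rightarrow> ('a \<Rightarrow> ennreal) \<Rightarrow> bool" where
  "lsc_within D g \<longleftrightarrow> (\<forall>p\<in>D. g p \<le> Liminf (at p within D) g)"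

definition Gamma0 :: "(real \<Rightarrow> ennreal) set" where
  "Gamma0 = {F. convex_on_nonneg F \<and> lsc_within {0..} F \<and> F 1 = 0}"

definition recession :: "(real \<Rightarrow> ennreal) \<Rightarrow> real \<Rightarrow> ennreal" where
  "recession F r = Lim at_top (\<lambda>\<alpha>::real. F (1 + \<alpha> * r) / ennreal \<alpha>)"

definition perspective :: "(real \<Rightarrow> ennreal) \<Rightarrow> real \<Rightarrow> real \<Rightarrow> ennreal" where
  "perspective F r t = (if t > 0 then ennreal t * F (r / t) else recession F r)"

definition marg_persp_pre :: "(real \<Rightarrow> ennreal) \<Rightarrow> real \<times> real \<Rightarrow> ennreal" where
  "marg_persp_pre F p =
     (INF \<theta>\<in>{0<..}. perspective F \<theta> (fst p) + perspective F \<theta> (snd p))"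

definition quadrant :: "(real \<times> real) set" where
  "quadrant = {0..} \<times> {0..}"

definition marg_persp :: "(real \<Rightarrow> ennreal) \<Rightarrow> real \<Rightarrow> real \<Rightarrow> ennreal" where
  "marg_persp F r1 r2 =
     (SUP g\<in>{g. lsc_within quadrant g \<and> (\<forall>q\<in>quadrant. g q \<le> marg_persp_pre F q)}. g (r1, r2))"

end

theory Submission
  imports Defs
begin


definition SS :: "(real \<Rightarrow> ennreal) \<Rightarrow> (real \<times> real \<Rightarrow> ennreal) set" where
  "SS F = {g. lsc_within quadrant g \<and> (\<forall>q\<in>quadrant. g q \<le> marg_persp_pre F q)}"

definition HH :: "(real \<Rightarrow> ennreal) \<Rightarrow> real \<times> real \<Rightarrow> ennreal" where
  "HH F q = marg_persp F (fst q) (snd q)"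

lemma HH_eq: "HH F q = (SUP g\<in>SS F. g q)"
  by (simp add: HH_def marg_persp_def SS_def)

lemma HH_le_pre: "q \<in> quadrant \<Longrightarrow> HH F q \<le> marg_persp_pre F q"
  unfolding HH_eq by (rule SUP_least) (auto simp: SS_def)

lemma HH_ge: "g \<in> SS F \<Longrightarrow> g q \<le> HH F q"
  unfolding HH_eq by (rule SUP_upper)

lemma HH_lsc: "lsc_within quadrant (HH F)"
  unfolding lsc_within_def
proof (intro ballI)
  fix p assume p: "p \<in> quadrant"
  show "HH F p \<le> Liminf (at p within quadrant) (HH F)"
  proof (subst le_Liminf_iff, intro allI impI)
    fix y assume "y < HH F p"
    then obtain g where g: "g \<in> SS F" "y < g p" unfolding HH_eq by (auto simp: less_SUP_iff)
    then have "g p \<le> Liminf (at p within quadrant) g" using p by (auto simp: SS_def lsc_within_def)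
    then have "eventually (\<lambda>x. y < g x) (at p within quadrant)" using g(2) le_Liminf_iff by blast
    then show "eventually (\<lambda>x. y < HH F x) (at p within quadrant)"
      by eventually_elim (use HH_ge[OF g(1)] in \<open>blast intro: less_le_trans\<close>)
  qed
qed

lemma HH_in: "HH F \<in> SS F"
  using HH_lsc HH_le_pre by (auto simp: SS_def)

lemma lsc_comp:
  assumes f: "lsc_within quadrant f" and T: "continuous_on quadrant T" "T ` quadrant \<subseteq> quadrant"
    and k: "k > 0"
  shows "lsc_within quadrant (\<lambda>q. ennreal k * f (T q))"
  unfolding lsc_within_def
proof (intro ballI)
  fix p assume p: "p \<in> quadrant"
  have Tp: "T p \<in> quadrant" using T p by auto
  show "ennreal k * f (T p) \<le> Liminf (at p within quadrant) (\<lambda>q. ennreal k * f (T q))"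
  proof (subst le_Liminf_iff, intro allI impI)
    fix y assume y: "y < ennreal k * f (T p)"
    define y' where "y' = y / ennreal k"
    have kk: "ennreal k \<noteq> 0" "ennreal k \<noteq> top" using k by auto
    have yy: "ennreal k * y' = y" unfolding y'_def
      by (metis kk mult.commute mult_divide_eq_ennreal ennreal_times_divide)
    have y'lt: "y' < f (T p)"
    proof (rule ccontr)
      assume "\<not> y' < f (T p)"
      then have "ennreal k * f (T p) \<le> ennreal k * y'" by (intro mult_left_mono) auto
      then show False using y yy by simp
    qed
    have "f (T p) \<le> Liminf (at (T p) within quadrant) f" using f Tp by (auto simp: lsc_within_def)
    then have ev: "eventually (\<lambda>x. y' < f x) (at (T p) within quadrant)" using y'lt le_Liminf_iff by blast
    have ev2: "eventually (\<lambda>x. x \<in> quadrant \<longrightarrow> y' < f x) (nhds (T p))"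
      using ev unfolding eventually_at_filter by eventually_elim (use y'lt in auto)
    have lim: "filterlim T (nhds (T p)) (at p within quadrant)"
      using T(1) p by (auto simp: continuous_on_def)
    have ev3: "eventually (\<lambda>q. T q \<in> quadrant \<longrightarrow> y' < f (T q)) (at p within quadrant)"
      by (rule eventually_compose_filterlim[OF ev2 lim])
    have ev4: "eventually (\<lambda>q. q \<in> quadrant) (at p within quadrant)"
      by (simp add: eventually_at_filter)
    show "eventually (\<lambda>q. y < ennreal k * f (T q)) (at p within quadrant)"
      using ev3 ev4
    proof eventually_elim
      case (elim q)
      then have "y' < f (T q)" using T by auto
      then have "ennreal k * y' < ennreal k * f (T q)"
        using k by (intro ennreal_mult_strict_left_mono) auto
      then show ?case using yy by simp
    qed
  qed
qed

lemma transfer_HH: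
  assumes T: "continuous_on quadrant T" "T ` quadrant \<subseteq> quadrant" and k: "k > 0"
    and pre: "\<And>q. q \<in> quadrant \<Longrightarrow> ennreal k * marg_persp_pre F (T q) \<le> marg_persp_pre F q"
    and q: "q \<in> quadrant"
  shows "ennreal k * HH F (T q) \<le> HH F q"
proof -
  have "(\<lambda>q. ennreal k * HH F (T q)) \<in> SS F"
    unfolding SS_def
  proof (intro CollectI conjI ballI)
    show "lsc_within quadrant (\<lambda>q. ennreal k * HH F (T q))" by (rule lsc_comp[OF HH_lsc T k])
    fix q assume q: "q \<in> quadrant"
    have "ennreal k * HH F (T q) \<le> ennreal k * marg_persp_pre F (T q)"
      using HH_le_pre[of "T q" F] T q by (intro mult_left_mono) auto
    also have "\<dots> \<le> marg_persp_pre F q" using pre q .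
    finally show "ennreal k * HH F (T q) \<le> marg_persp_pre F q" .
  qed
  from HH_ge[OF this] show ?thesis .
qed



lemma div_ennreal_eq: "\<alpha> > 0 \<Longrightarrow> X / ennreal \<alpha> = X * ennreal (1 / \<alpha>)"
  by (simp add: divide_ennreal_def inverse_ennreal inverse_eq_divide)

lemma cvx: "convex_on_nonneg F \<Longrightarrow> x \<ge> 0 \<Longrightarrow> y \<ge> 0 \<Longrightarrow> 0 \<le> t \<Longrightarrow> t \<le> 1 \<Longrightarrow>
   F ((1 - t) * x + t * y) \<le> ennreal (1 - t) * F x + ennreal t * F y"
  unfolding convex_on_nonneg_def by auto

lemma rec_mono:
  assumes cv: "convex_on_nonneg F" and F1: "F 1 = 0" and th: "\<theta> \<ge> 0"
    and ab: "0 < \<alpha>" "\<alpha> \<le> \<beta>"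
  shows "F (1 + \<alpha> * \<theta>) / ennreal \<alpha> \<le> F (1 + \<beta> * \<theta>) / ennreal \<beta>"
proof -
  define t where "t = \<alpha> / \<beta>"
  have b: "\<beta> > 0" using ab by simp
  have t: "t \<in> {0..1}" using ab b by (auto simp: t_def)
  have eq: "(1 - t) * 1 + t * (1 + \<beta> * \<theta>) = 1 + \<alpha> * \<theta>" using b
    by (simp add: t_def field_simps)
  have "F ((1 - t) * 1 + t * (1 + \<beta> * \<theta>)) \<le> ennreal (1 - t) * F 1 + ennreal t * F (1 + \<beta> * \<theta>)"
    using t th b by (intro cvx[OF cv]) auto
  then have le: "F (1 + \<alpha> * \<theta>) \<le> ennreal t * F (1 + \<beta> * \<theta>)" unfolding eq F1 by simp
  have "F (1 + \<alpha> * \<theta>) / ennreal \<alpha> = F (1 + \<alpha> * \<theta>) * ennreal (1/\<alpha>)"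
    using ab by (simp add: div_ennreal_eq)
  also have "\<dots> \<le> ennreal t * F (1 + \<beta> * \<theta>) * ennreal (1/\<alpha>)"
    using le by (intro mult_right_mono) auto
  also have "\<dots> = F (1 + \<beta> * \<theta>) * (ennreal t * ennreal (1/\<alpha>))" by (simp add: ac_simps)
  also have "ennreal t * ennreal (1/\<alpha>) = ennreal (1/\<beta>)"
    using ab b by (simp add: ennreal_mult[symmetric] t_def)
  also have "F (1 + \<beta> * \<theta>) * ennreal (1/\<beta>) = F (1 + \<beta> * \<theta>) / ennreal \<beta>"
    using b by (simp add: div_ennreal_eq)
  finally show ?thesis .
qed

lemma rec_tendsto:
  assumes cv: "convex_on_nonneg F" and F1: "F 1 = 0" and th: "\<theta> \<ge> 0"
  shows "((\<lambda>\<alpha>. F (1 + \<alpha> * \<theta>) / ennreal \<alpha>) \<longlongrightarrow> (SUP \<alpha>\<in>{0<..}. F (1 + \<alpha> * \<theta>) / ennreal \<alpha>)) at_top"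
    (is "(?f \<longlongrightarrow> ?S) _")
proof (rule order_tendstoI)
  fix y assume "y < ?S"
  then obtain \<alpha>0 where a0: "\<alpha>0 > 0" "y < ?f \<alpha>0" by (auto simp: less_SUP_iff)
  show "eventually (\<lambda>\<alpha>. y < ?f \<alpha>) at_top"
    using eventually_ge_at_top[of \<alpha>0]
    by eventually_elim (use a0 rec_mono[OF cv F1 th] in \<open>blast intro: less_le_trans\<close>)
next
  fix y assume y: "?S < y"
  show "eventually (\<lambda>\<alpha>. ?f \<alpha> < y) at_top"
    using eventually_gt_at_top[of 0]
  proof eventually_elim
    case (elim \<alpha>)
    then have "?f \<alpha> \<le> ?S" by (intro SUP_upper) auto
    then show ?case using y by simp
  qed
qed

lemma rec_eq:
  assumes cv: "convex_on_nonneg F" and F1: "F 1 = 0" and th: "\<theta> \<ge> 0"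
  shows "recession F \<theta> = (SUP \<alpha>\<in>{0<..}. F (1 + \<alpha> * \<theta>) / ennreal \<alpha>)"
  unfolding recession_def using rec_tendsto[OF assms] by (intro tendsto_Lim) auto

lemma rec_ge:
  assumes cv: "convex_on_nonneg F" and F1: "F 1 = 0" and th: "\<theta> \<ge> 0" and a: "\<alpha> > 0"
  shows "F (1 + \<alpha> * \<theta>) / ennreal \<alpha> \<le> recession F \<theta>"
  unfolding rec_eq[OF cv F1 th] using a by (intro SUP_upper) auto

lemma rec_scale:
  assumes cv: "convex_on_nonneg F" and F1: "F 1 = 0" and th: "\<theta> \<ge> 0" and c: "c > 0"
  shows "recession F (c * \<theta>) \<le> ennreal c * recession F \<theta>"
  unfolding rec_eq[OF cv F1 mult_nonneg_nonneg[OF less_imp_le[OF c] th]]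
proof (rule SUP_least)
  fix \<alpha> :: real assume "\<alpha> \<in> {0<..}"
  then have a: "\<alpha> > 0" by simp
  have "F (1 + \<alpha> * (c * \<theta>)) / ennreal \<alpha> = ennreal c * (F (1 + (\<alpha> * c) * \<theta>) / ennreal (\<alpha> * c))"
  proof -
    have "F (1 + \<alpha> * (c * \<theta>)) / ennreal \<alpha> = F (1 + (\<alpha> * c) * \<theta>) * ennreal (1/\<alpha>)"
      using a by (simp add: div_ennreal_eq ac_simps)
    also have "ennreal (1/\<alpha>) = ennreal c * ennreal (1/(\<alpha> * c))"
      using a c by (simp add: ennreal_mult[symmetric])
    also have "F (1 + (\<alpha> * c) * \<theta>) * (ennreal c * ennreal (1/(\<alpha> * c))) =
        ennreal c * (F (1 + (\<alpha> * c) * \<theta>) * ennreal (1/(\<alpha> * c)))" by (simp add: ac_simps)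
    also have "F (1 + (\<alpha> * c) * \<theta>) * ennreal (1/(\<alpha> * c)) = F (1 + (\<alpha> * c) * \<theta>) / ennreal (\<alpha> * c)"
      using a c by (simp add: div_ennreal_eq)
    finally show ?thesis .
  qed
  also have "\<dots> \<le> ennreal c * recession F \<theta>"
    using a c by (intro mult_left_mono rec_ge[OF cv F1 th]) auto
  finally show "F (1 + \<alpha> * (c * \<theta>)) / ennreal \<alpha> \<le> ennreal c * recession F \<theta>" .
qed



lemma ennreal_le1_mult: "x \<le> 1 \<Longrightarrow> ennreal x * (X::ennreal) \<le> X"
  using mult_right_mono[of "ennreal x" 1 X] by (simp add: ennreal_le_1)

lemma persp_scale:
  assumes cv: "convex_on_nonneg F" and F1: "F 1 = 0" and th: "\<theta> > 0" and r: "r \<ge> 0" and c: "c > 0"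
  shows "perspective F (c * \<theta>) (c * r) \<le> ennreal c * perspective F \<theta> r"
proof (cases "r > 0")
  case True
  then have "perspective F (c * \<theta>) (c * r) = ennreal c * perspective F \<theta> r"
    using c by (simp add: perspective_def ennreal_mult mult.assoc)
  then show ?thesis by simp
next
  case False
  then have "r = 0" using r by simp
  then show ?thesis using rec_scale[OF cv F1 _ c, of \<theta>] th c by (simp add: perspective_def)
qed

lemma pre_scale:
  assumes cv: "convex_on_nonneg F" and F1: "F 1 = 0" and q: "q \<in> quadrant" and c: "c > 0"
  shows "ennreal (1 / c) * marg_persp_pre F (c *\<^sub>R q) \<le> marg_persp_pre F q"
proof -
  obtain r1 r2 where qq: "q = (r1, r2)" "r1 \<ge> 0" "r2 \<ge> 0" using q by (auto simp: quadrant_def)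
  show ?thesis unfolding marg_persp_pre_def
  proof (rule INF_greatest)
    fix \<theta> :: real assume "\<theta> \<in> {0<..}"
    then have th: "\<theta> > 0" by simp
    let ?A = "perspective F \<theta> (fst q) + perspective F \<theta> (snd q)"
    have "(INF \<theta>\<in>{0<..}. perspective F \<theta> (fst (c *\<^sub>R q)) + perspective F \<theta> (snd (c *\<^sub>R q)))
        \<le> perspective F (c * \<theta>) (fst (c *\<^sub>R q)) + perspective F (c * \<theta>) (snd (c *\<^sub>R q))"
      using th c by (intro INF_lower) auto
    also have "\<dots> \<le> ennreal c * perspective F \<theta> (fst q) + ennreal c * perspective F \<theta> (snd q)"
      using qq th c by (auto intro!: add_mono persp_scale[OF cv F1])
    also have "\<dots> = ennreal c * ?A" by (simp add: distrib_left)
    finally have le: "(INF \<theta>\<in>{0<..}. perspective F \<theta> (fst (c *\<^sub>R q)) + perspective F \<theta> (snd (c *\<^sub>R q)))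
        \<le> ennreal c * ?A" .
    have "ennreal (1 / c) * (INF \<theta>\<in>{0<..}. perspective F \<theta> (fst (c *\<^sub>R q)) + perspective F \<theta> (snd (c *\<^sub>R q)))
        \<le> ennreal (1/c) * (ennreal c * ?A)" using le by (rule mult_left_mono) simp
    also have "\<dots> = ?A" using c by (simp add: mult.assoc[symmetric] ennreal_mult[symmetric])
    finally show "ennreal (1 / c) * (INF \<theta>\<in>{0<..}. perspective F \<theta> (fst (c *\<^sub>R q)) + perspective F \<theta> (snd (c *\<^sub>R q)))
        \<le> ?A" .
  qed
qed

lemma pre_contr:
  assumes cv: "convex_on_nonneg F" and F1: "F 1 = 0" and l: "0 < l" "l < 1"
    and r1: "r1 \<ge> 0" and r2: "r2 \<ge> 0"
  shows "marg_persp_pre F ((1 - l) * r1 + l * r2, r2) \<le> marg_persp_pre F (r1, r2)"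
proof (cases "r2 = 0")
  case True
  have q: "(r1, r2) \<in> quadrant" using r1 r2 by (auto simp: quadrant_def)
  have c: "1 - l > 0" using l by simp
  have "ennreal (1 / (1 - l)) * marg_persp_pre F ((1 - l) *\<^sub>R (r1, r2)) \<le> marg_persp_pre F (r1, r2)"
    by (rule pre_scale[OF cv F1 q c])
  then have "ennreal (1 - l) * (ennreal (1 / (1 - l)) * marg_persp_pre F ((1 - l) *\<^sub>R (r1, r2)))
      \<le> ennreal (1 - l) * marg_persp_pre F (r1, r2)" by (rule mult_left_mono) simp
  moreover have "ennreal (1 - l) * (ennreal (1 / (1 - l)) * X) = X" for X
    using c by (simp add: mult.assoc[symmetric] ennreal_mult[symmetric])
  moreover have "ennreal (1 - l) * marg_persp_pre F (r1, r2) \<le> marg_persp_pre F (r1, r2)"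
    using l by (intro ennreal_le1_mult) simp
  ultimately show ?thesis using True by simp
next
  case False
  then have r2p: "r2 > 0" using r2 by simp
  define s where "s = (1 - l) * r1 + l * r2"
  have sp: "s > 0" using l r1 r2p by (simp add: s_def add_nonneg_pos)
  show ?thesis unfolding marg_persp_pre_def fst_conv snd_conv s_def[symmetric]
  proof (rule INF_greatest)
    fix \<theta> :: real assume "\<theta> \<in> {0<..}"
    then have th: "\<theta> > 0" by simp
    define \<theta>' where "\<theta>' = (1 - l) * \<theta> + l * r2"
    have th': "\<theta>' > 0" using l th r2p by (simp add: \<theta>'_def add_pos_pos)
    have B: "perspective F \<theta>' r2 \<le> ennreal (1 - l) * perspective F \<theta> r2"
    proof -
      have eq: "\<theta>' / r2 = (1 - l) * (\<theta> / r2) + l * 1" using r2p by (simp add: \<theta>'_def field_simps)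
      have "F ((1 - (1 - l)) * 1 + (1 - l) * (\<theta> / r2)) \<le> ennreal (1 - (1 - l)) * F 1 + ennreal (1 - l) * F (\<theta> / r2)"
        using l th r2p by (intro cvx[OF cv]) auto
      then have "F (\<theta>' / r2) \<le> ennreal (1 - l) * F (\<theta> / r2)" using F1 by (simp add: eq ac_simps)
      then have "ennreal r2 * F (\<theta>' / r2) \<le> ennreal r2 * (ennreal (1 - l) * F (\<theta> / r2))"
        by (rule mult_left_mono) simp
      then show ?thesis using r2p by (simp add: perspective_def ac_simps)
    qed
    have A: "perspective F \<theta>' s \<le> ennreal (1 - l) * perspective F \<theta> r1"
    proof (cases "r1 = 0")
      case False
      then have r1p: "r1 > 0" using r1 by simp
      define t where "t = (1 - l) * r1 / s"
      have t: "0 \<le> t" "t \<le> 1" using l r1p sp r2p by (auto simp: t_def s_def field_simps)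
      have e1: "t * (\<theta> / r1) = (1 - l) * \<theta> / s" using r1p by (simp add: t_def)
      have e2: "1 - t = l * r2 / s" using sp by (simp add: t_def s_def field_simps)
      have eq: "\<theta>' / s = (1 - t) * 1 + t * (\<theta> / r1)" unfolding e1 e2 \<theta>'_def
        by (simp add: add_divide_distrib)
      have "F ((1 - t) * 1 + t * (\<theta> / r1)) \<le> ennreal (1 - t) * F 1 + ennreal t * F (\<theta> / r1)"
        using t th r1p by (intro cvx[OF cv]) auto
      then have "F (\<theta>' / s) \<le> ennreal t * F (\<theta> / r1)" using F1 by (simp add: eq)
      then have "ennreal s * F (\<theta>' / s) \<le> ennreal s * (ennreal t * F (\<theta> / r1))"
        by (rule mult_left_mono) simp
      also have "ennreal s * (ennreal t * F (\<theta> / r1)) = ennreal (1 - l) * (ennreal r1 * F (\<theta> / r1))"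
      proof -
        have "s * t = (1 - l) * r1" using sp by (simp add: t_def)
        then have "ennreal s * ennreal t = ennreal (1 - l) * ennreal r1"
          using sp t l r1p by (simp add: ennreal_mult[symmetric])
        then show ?thesis by (simp add: mult.assoc[symmetric])
      qed
      finally show ?thesis using sp r1p by (simp add: perspective_def)
    next
      case True
      define \<alpha> where "\<alpha> = (1 - l) / (l * r2)"
      have ap: "\<alpha> > 0" using l r2p by (simp add: \<alpha>_def)
      have seq: "s = l * r2" using True by (simp add: s_def)
      have eq: "\<theta>' / s = 1 + \<alpha> * \<theta>" using l r2p
        by (simp add: seq \<alpha>_def \<theta>'_def field_simps)
      have "ennreal (1 - l) * (F (1 + \<alpha> * \<theta>) / ennreal \<alpha>) \<le> ennreal (1 - l) * recession F \<theta>"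
        using rec_ge[OF cv F1 _ ap, of \<theta>] th by (intro mult_left_mono) auto
      moreover have "ennreal (1 - l) * (F (1 + \<alpha> * \<theta>) / ennreal \<alpha>) = ennreal s * F (\<theta>' / s)"
      proof -
        have "ennreal (1 - l) * (F (1 + \<alpha> * \<theta>) / ennreal \<alpha>) = F (1 + \<alpha> * \<theta>) * (ennreal (1 - l) * ennreal (1 / \<alpha>))"
          using ap by (simp add: div_ennreal_eq ac_simps)
        also have "ennreal (1 - l) * ennreal (1 / \<alpha>) = ennreal s"
          using l ap r2p by (simp add: ennreal_mult[symmetric] seq \<alpha>_def)
        finally show ?thesis by (simp add: eq mult.commute)
      qed
      ultimately show ?thesis using sp True by (simp add: perspective_def)
    qed
    have "(INF \<theta>\<in>{0<..}. perspective F \<theta> s + perspective F \<theta> r2) \<le> perspective F \<theta>' s + perspective F \<theta>' r2"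
      using th' by (intro INF_lower) auto
    also have "\<dots> \<le> ennreal (1 - l) * perspective F \<theta> r1 + ennreal (1 - l) * perspective F \<theta> r2"
      using A B by (rule add_mono)
    also have "\<dots> = ennreal (1 - l) * (perspective F \<theta> r1 + perspective F \<theta> r2)" by (simp add: distrib_left)
    also have "\<dots> \<le> perspective F \<theta> r1 + perspective F \<theta> r2"
      using l by (intro ennreal_le1_mult) simp
    finally show "(INF \<theta>\<in>{0<..}. perspective F \<theta> s + perspective F \<theta> r2) \<le> perspective F \<theta> r1 + perspective F \<theta> r2" .
  qed
qed



lemma pre_swap: "marg_persp_pre F (prod.swap q) = marg_persp_pre F q"
  by (simp add: marg_persp_pre_def add.commute)

lemma HH_swap: "q \<in> quadrant \<Longrightarrow> HH F (prod.swap q) = HH F q"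
proof -
  have cont: "continuous_on quadrant prod.swap" by (intro continuous_intros)
  have img: "prod.swap ` quadrant \<subseteq> quadrant" by (auto simp: quadrant_def)
  have *: "HH F (prod.swap q) \<le> HH F q" if "q \<in> quadrant" for q
    using transfer_HH[OF cont img, of 1 F q] that by (simp add: pre_swap)
  assume "q \<in> quadrant"
  with *[of q] *[of "prod.swap q"] show ?thesis by (auto simp: quadrant_def)
qed

lemma HH_scale:
  assumes cv: "convex_on_nonneg F" and F1: "F 1 = 0" and q: "q \<in> quadrant" and c: "c > 0"
  shows "HH F (c *\<^sub>R q) = ennreal c * HH F q"
proof -
  have *: "ennreal (1 / c) * HH F (c *\<^sub>R q) \<le> HH F q" if "q \<in> quadrant" "c > 0" for q c
  proof -
    have cont: "continuous_on quadrant (\<lambda>q. c *\<^sub>R q)" by (intro continuous_intros)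
    have img: "(\<lambda>q. c *\<^sub>R q) ` quadrant \<subseteq> quadrant" using that(2) by (auto simp: quadrant_def)
    show ?thesis using transfer_HH[OF cont img, of "1/c" F q] that pre_scale[OF cv F1 _ that(2)] by simp
  qed
  have cq: "c *\<^sub>R q \<in> quadrant" using q c by (auto simp: quadrant_def)
  have a: "ennreal (1 / c) * HH F (c *\<^sub>R q) \<le> HH F q" using *[OF q c] .
  have b: "ennreal c * HH F q \<le> HH F (c *\<^sub>R q)" using *[OF cq, of "1/c"] c by simp
  have "HH F (c *\<^sub>R q) = ennreal c * (ennreal (1 / c) * HH F (c *\<^sub>R q))"
    using c by (simp add: mult.assoc[symmetric] ennreal_mult[symmetric])
  also have "\<dots> \<le> ennreal c * HH F q" using a by (rule mult_left_mono) simp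
  finally show ?thesis using b by simp
qed

lemma HH_contr:
  assumes cv: "convex_on_nonneg F" and F1: "F 1 = 0" and l: "0 < l" "l < 1"
    and r1: "r1 \<ge> 0" and r2: "r2 \<ge> 0"
  shows "HH F ((1 - l) * r1 + l * r2, r2) \<le> HH F (r1, r2)"
proof -
  let ?T = "\<lambda>q. ((1 - l) * fst q + l * snd q, snd q)"
  have cont: "continuous_on quadrant ?T" by (intro continuous_intros)
  have img: "?T ` quadrant \<subseteq> quadrant" using l by (auto simp: quadrant_def)
  show ?thesis using transfer_HH[OF cont img, of 1 F "(r1, r2)"] pre_contr[OF cv F1 l] r1 r2
    by (auto simp: quadrant_def)
qed

lemma HH_diag:
  assumes F1: "F 1 = 0" and x: "x > 0"
  shows "HH F (x, x) = 0"
proof -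
  have "HH F (x, x) \<le> marg_persp_pre F (x, x)" using x by (intro HH_le_pre) (auto simp: quadrant_def)
  also have "\<dots> \<le> perspective F x x + perspective F x x"
    unfolding marg_persp_pre_def fst_conv snd_conv using x by (intro INF_lower) auto
  also have "\<dots> = 0" using x F1 by (simp add: perspective_def)
  finally show ?thesis by simp
qed



theorem mainTheorem2:
  fixes G :: "real \<Rightarrow> ennreal" and a :: real
  assumes G: "G \<in> Gamma0"
    and finite: "\<And>x y. x \<ge> 0 \<Longrightarrow> y \<ge> 0 \<Longrightarrow> marg_persp G x y \<noteq> \<infinity>"
    and pos: "\<And>u. 0 \<le> u \<Longrightarrow> u < 1 \<Longrightarrow> marg_persp G u 1 > 0"
    and a: "0 < a" "a \<le> 1"
    and decr: "\<And>u v. 0 \<le> u \<Longrightarrow> u \<le> v \<Longrightarrow> v < 1 \<Longrightarrow>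
        (1 - v powr a) powr (1 / a) / enn2real (marg_persp G v 1)
          \<le> (1 - u powr a) powr (1 / a) / enn2real (marg_persp G u 1)"
  shows "\<And>x y z. x \<ge> 0 \<Longrightarrow> y \<ge> 0 \<Longrightarrow> z \<ge> 0 \<Longrightarrow>
      enn2real (marg_persp G x z) powr a
        \<le> enn2real (marg_persp G x y) powr a + enn2real (marg_persp G y z) powr a"
proof -
  have cv: "convex_on_nonneg G" and F1: "G 1 = 0" using G by (auto simp: Gamma0_def)
  define Hr where "Hr x y = enn2real (marg_persp G x y)" for x y
  have mp: "marg_persp G x y = HH G (x, y)" for x y by (simp add: HH_def)
  have fin: "HH G (x, y) < top" if "x \<ge> 0" "y \<ge> 0" for x y
    using finite[OF that] by (simp add: mp top.not_eq_extremum)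
  have nn: "Hr x y \<ge> 0" for x y by (simp add: Hr_def)
  have sym: "Hr x y = Hr y x" if "x \<ge> 0" "y \<ge> 0" for x y
    using HH_swap[of "(x, y)" G] that by (simp add: Hr_def mp quadrant_def)
  have hom: "Hr (c * x) (c * y) = c * Hr x y" if "c > 0" "x \<ge> 0" "y \<ge> 0" for c x y
    using HH_scale[OF cv F1, of "(x, y)" c] that by (simp add: Hr_def mp quadrant_def enn2real_mult)
  have zero: "Hr x x = 0" if "x \<ge> 0" for x
  proof (cases "x = 0")
    case True
    have "Hr (2 * 0) (2 * 0) = 2 * Hr 0 0" by (rule hom) auto
    then show ?thesis using True by simp
  next
    case False
    then show ?thesis using that HH_diag[of G x] F1 by (simp add: Hr_def mp)
  qed
  have mono: "Hr x 1 \<le> Hr y 1" if "0 \<le> y" "y \<le> x" "x \<le> 1" for x y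
  proof (cases "x = y \<or> x = 1")
    case True
    then show ?thesis using zero nn by auto
  next
    case False
    then have yx: "y < x" "x < 1" using that by auto
    define l where "l = (x - y) / (1 - y)"
    have l: "0 < l" "l < 1" using yx that by (auto simp: l_def field_simps)
    have ly: "l * (1 - y) = x - y" using yx by (simp add: l_def)
    have eq: "(1 - l) * y + l = x" using ly by (simp add: algebra_simps)
    have "HH G (x, 1) \<le> HH G (y, 1)" using HH_contr[OF cv F1 l, of y 1] that by (simp add: eq)
    then show ?thesis unfolding Hr_def mp using fin[of y 1] that by (intro enn2real_mono) auto
  qed
  have posr: "Hr u 1 > 0" if "0 \<le> u" "u < 1" for u
    using pos[OF that] fin[of u 1] that by (simp add: Hr_def mp enn2real_positive_iff)
  have core: "Hr x 1 powr a \<le> Hr x y powr a + Hr y 1 powr a" if x: "0 \<le> x" "x \<le> 1" and y: "y \<ge> 0" for x y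
  proof -
    consider "y \<le> x" | "y \<ge> 1" | "x < y" "y < 1" by linarith
    then show ?thesis
    proof cases
      case 1
      then have "Hr x 1 powr a \<le> Hr y 1 powr a" using mono[of y x] x y a nn by (intro powr_mono2) auto
      then show ?thesis using nn by (smt (verit) powr_ge_zero)
    next
      case 2
      then have yp: "y > 0" by simp
      have h: "Hr x y = y * Hr (x / y) 1" using hom[OF yp, of "x/y" 1] yp x by simp
      have "x \<le> x * y" using 2 x by (simp add: mult_le_cancel_left1)
      then have "x / y \<le> x" using yp by (simp add: divide_le_eq)
      then have "Hr x 1 \<le> Hr (x / y) 1" using x yp by (intro mono) auto
      also have "\<dots> \<le> y * Hr (x / y) 1" using 2 nn[of "x/y" 1] by (intro mult_le_cancel_right1[THEN iffD2]) (auto simp: not_less)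
      finally have "Hr x 1 powr a \<le> Hr x y powr a" using h a nn by (intro powr_mono2) auto
      then show ?thesis using nn by (smt (verit) powr_ge_zero)
    next
      case 3
      then have yp: "y > 0" and x1: "x < 1" using x by auto
      define w where "w = x / y"
      have "x * y \<le> x" using 3 x by (simp add: mult_left_le)
      then have w: "0 \<le> w" "x \<le> w" "w < 1" using 3 x yp by (auto simp: w_def le_divide_eq divide_less_eq)
      have h: "Hr x y = y * Hr w 1" using hom[OF yp, of w 1] yp w by (simp add: w_def)
      define B where "B v = (1 - v powr a) powr (1 / a)" for v
      have Bpow: "B v powr a = 1 - v powr a" if "0 \<le> v" "v \<le> 1" for v
      proof -
        have "v powr a \<le> 1" using that a by (intro powr_le1) auto
        then show ?thesis using a by (simp add: B_def powr_powr)
      qed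
      have xa: "x powr a < 1" using powr_less_mono2[of a x 1] x x1 a by simp
      have Ap: "B x > 0" using xa by (simp add: B_def)
      have px: "Hr x 1 > 0" using posr x x1 by auto
      define k where "k = Hr x 1 / B x"
      have kp: "k > 0" using px Ap by (simp add: k_def)
      have kb: "k * B v \<le> Hr v 1" if "x \<le> v" "v < 1" for v
      proof -
        have pv: "Hr v 1 > 0" using posr that x by auto
        have "B v / Hr v 1 \<le> B x / Hr x 1" using decr[of x v] that x by (simp add: B_def Hr_def)
        then have "B v \<le> B x / Hr x 1 * Hr v 1" using pv by (simp add: divide_le_eq)
        then have "B v * Hr x 1 / B x \<le> Hr v 1" using px Ap by (simp add: field_simps)
        then show ?thesis by (simp add: k_def field_simps)
      qed
      have kbpow: "k powr a * (1 - v powr a) \<le> Hr v 1 powr a" if "x \<le> v" "v < 1" for v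
      proof -
        have "(k * B v) powr a \<le> Hr v 1 powr a"
          using kb[OF that] kp a by (intro powr_mono2) (auto simp: B_def)
        moreover have "(k * B v) powr a = k powr a * (1 - v powr a)"
        proof -
          have "(k * B v) powr a = k powr a * B v powr a" by (rule powr_mult)
          also have "B v powr a = 1 - v powr a" using that x by (intro Bpow) auto
          finally show ?thesis .
        qed
        ultimately show ?thesis by simp
      qed
      have t1: "k powr a * (1 - y powr a) \<le> Hr y 1 powr a" using kbpow[of y] 3 by simp
      have t2: "k powr a * (1 - w powr a) \<le> Hr w 1 powr a" using kbpow[of w] w by simp
      have wa: "y powr a * w powr a = x powr a" using yp x by (simp add: w_def powr_divide)
      have "Hr x y powr a = y powr a * Hr w 1 powr a" using h yp nn by (simp add: powr_mult)
      also have "\<dots> \<ge> y powr a * (k powr a * (1 - w powr a))" using t2 by (intro mult_left_mono) auto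
      finally have t2': "k powr a * (y powr a - x powr a) \<le> Hr x y powr a"
        using wa by (simp add: algebra_simps)
      have "Hr x 1 powr a = (k * B x) powr a" using Ap by (simp add: k_def)
      also have "\<dots> = k powr a * (1 - x powr a)"
      proof -
        have "(k * B x) powr a = k powr a * B x powr a" by (rule powr_mult)
        also have "B x powr a = 1 - x powr a" using x by (intro Bpow) auto
        finally show ?thesis .
      qed
      also have "\<dots> = k powr a * (y powr a - x powr a) + k powr a * (1 - y powr a)" by (simp add: algebra_simps)
      also have "\<dots> \<le> Hr x y powr a + Hr y 1 powr a" using t1 t2' by simp
      finally show ?thesis .
    qed
  qed
  have main: "Hr x z powr a \<le> Hr x y powr a + Hr y z powr a"
    if xz: "0 \<le> x" "x \<le> z" and y: "0 \<le> y" for x y z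
  proof (cases "z = 0")
    case True
    then have "x = 0" using xz by simp
    then show ?thesis using True zero nn by (simp add: add_nonneg_nonneg)
  next
    case False
    then have zp: "z > 0" using xz by simp
    have x': "0 \<le> x / z" "x / z \<le> 1" using xz zp by auto
    have y': "0 \<le> y / z" using y zp by simp
    have e1: "Hr x z = z * Hr (x / z) 1" using hom[OF zp, of "x/z" 1] zp x' by simp
    have e2: "Hr x y = z * Hr (x / z) (y / z)" using hom[OF zp, of "x/z" "y/z"] zp x' y' by simp
    have e3: "Hr y z = z * Hr (y / z) 1" using hom[OF zp, of "y/z" 1] zp y' by simp
    have "Hr x z powr a = z powr a * Hr (x / z) 1 powr a" using e1 zp nn by (simp add: powr_mult)
    also have "\<dots> \<le> z powr a * (Hr (x / z) (y / z) powr a + Hr (y / z) 1 powr a)"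
      using core[OF x' y'] by (intro mult_left_mono) auto
    also have "\<dots> = Hr x y powr a + Hr y z powr a"
      using e2 e3 zp nn by (simp add: powr_mult distrib_left)
    finally show ?thesis .
  qed
  fix x y z :: real assume xyz: "x \<ge> 0" "y \<ge> 0" "z \<ge> 0"
  show "enn2real (marg_persp G x z) powr a
        \<le> enn2real (marg_persp G x y) powr a + enn2real (marg_persp G y z) powr a"
  proof (cases "x \<le> z")
    case True
    then show ?thesis using main[of x z y] xyz by (simp add: Hr_def)
  next
    case False
    then have "Hr z x powr a \<le> Hr z y powr a + Hr y x powr a" using main[of z x y] xyz by simp
    then show ?thesis using sym xyz by (simp add: Hr_def add.commute)
  qed
qed


end
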